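(* Let $h:(\mathbb{R}^n,0)\to(\mathbb{R}^n,0)$ be a bi-Lipschitz homeomorphism germ, and let $U,V\subset\mathbb{R}^n$ be set-germs at $0$ with $0\in\overline{U}\cap\overline{V}$. Suppose that $D(U\cap V)=D(U)\cap D(V)$, and that $U\cap V$ and $h(U)$ satisfy condition (SSP). Then $D(h(U\cap V))=D(h(U))\cap D(h(V))$.
   Context: For a set-germ $A\subset\mathbb{R}^n$ at $0$, $D(A)=\{a\in S^{n-1}:\exists\, x_i\in A\setminus\{0\},\ x_i\to0,\ x_i/\|x_i\|\to a\}$ (empty if no such sequences exist). For sequences, $\|u_m\|\ll\|v_m\|,\|w_m\|$ means $\|u_m\|/\|v_m\|\to0$ and $\|u_m\|/\|w_m\|\to0$. A set-germ $A$ satisfies condition (SSP) if for every sequence $a_m\in\mathbb{R}^n$ tending to $0$ with $\lim a_m/\|a_m\|\in D(A)$ there is a sequence $b_m\in A$ with $\|a_m-b_m\|\ll\|a_m\|,\|b_m\|$. A bi-Lipschitz homeomorphism germ is a homeomorphism germ $h$ with $h(0)=0$ and constants $0<K_1\le K_2$ with $K_1\|x-y\|\le\|h(x)-h(y)\|\le K_2\|x-y\|$ near $0$. *)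

theory Defs
  imports "HOL-Analysis.Analysis"
begin

definition tangent_dirs :: "'a::euclidean_space set \<Rightarrow> 'a set" where
  "tangent_dirs A = {a \<in> sphere 0 1. \<exists>x::nat \<Rightarrow> 'a.
      (\<forall>i. x i \<in> A - {0}) \<and> x \<longlonglongrightarrow> 0 \<and> (\<lambda>i. x i /\<^sub>R norm (x i)) \<longlonglongrightarrow> a}"

text \<open>Condition (SSP).  u << v means norm u / norm v tends to 0.\<close>
definition SSP :: "'a::euclidean_space set \<Rightarrow> bool" where
  "SSP A \<longleftrightarrow> (\<forall>a::nat \<Rightarrow> 'a. a \<longlonglongrightarrow> 0 \<and>
      (\<exists>d \<in> tangent_dirs A. (\<lambda>m. a m /\<^sub>R norm (a m)) \<longlonglongrightarrow> d) \<longrightarrow>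
      (\<exists>b::nat \<Rightarrow> 'a. (\<forall>m. b m \<in> A) \<and>
         (\<lambda>m. norm (a m - b m) / norm (a m)) \<longlonglongrightarrow> 0 \<and>
         (\<lambda>m. norm (a m - b m) / norm (b m)) \<longlonglongrightarrow> 0))"

text \<open>h is a bi-Lipschitz homeomorphism germ at 0, represented on the ball of radius r.\<close>
definition bilipschitz_homeo_germ :: "('a::euclidean_space \<Rightarrow> 'a) \<Rightarrow> real \<Rightarrow> bool" where
  "bilipschitz_homeo_germ h r \<longleftrightarrow> r > 0 \<and> h 0 = 0 \<and>
     open (h ` ball 0 r) \<and> (\<exists>g. homeomorphism (ball 0 r) (h ` ball 0 r) h g) \<and>
     (\<exists>K1 K2. 0 < K1 \<and> K1 \<le> K2 \<and> (\<forall>x\<in>ball 0 r. \<forall>y\<in>ball 0 r.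
        K1 * norm (x - y) \<le> norm (h x - h y) \<and> norm (h x - h y) \<le> K2 * norm (x - y)))"

end

theory Submission
  imports Defs
begin

lemma dir_bound:
  fixes a b :: "'a::real_normed_vector"
  assumes "a \<noteq> 0"
  shows "norm (a /\<^sub>R norm a - b /\<^sub>R norm b) \<le> 2 * norm (a - b) / norm a"
proof (cases "b = 0")
  case True
  then show ?thesis using assms by simp
next
  case False
  have na: "norm a > 0" "norm b > 0" using assms False by auto
  have eq: "a /\<^sub>R norm a - b /\<^sub>R norm b = (a - b) /\<^sub>R norm a + ((norm b - norm a) / (norm a * norm b)) *\<^sub>R b"
  proof -
    have c: "inverse (norm a) = inverse (norm b) + (norm b - norm a) / (norm a * norm b)"
      using na by (simp add: field_simps)
    have "(a - b) /\<^sub>R norm a + ((norm b - norm a) / (norm a * norm b)) *\<^sub>R b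
       = a /\<^sub>R norm a - (inverse (norm b) + (norm b - norm a) / (norm a * norm b)) *\<^sub>R b + ((norm b - norm a) / (norm a * norm b)) *\<^sub>R b"
      by (simp add: c[symmetric] scaleR_diff_right)
    also have "\<dots> = a /\<^sub>R norm a - b /\<^sub>R norm b"
      by (simp add: scaleR_add_left)
    finally show ?thesis by simp
  qed
  have "norm (((norm b - norm a) / (norm a * norm b)) *\<^sub>R b) = \<bar>norm b - norm a\<bar> / norm a"
    using na by (simp add: abs_mult)
  also have "\<dots> \<le> norm (a - b) / norm a"
    using na norm_triangle_ineq3[of b a] by (simp add: divide_right_mono norm_minus_commute)
  finally have 2: "norm (((norm b - norm a) / (norm a * norm b)) *\<^sub>R b) \<le> norm (a - b) / norm a" .
  have "norm (a /\<^sub>R norm a - b /\<^sub>R norm b) \<le> norm ((a - b) /\<^sub>R norm a) + norm (((norm b - norm a) / (norm a * norm b)) *\<^sub>R b)"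
    unfolding eq by (rule norm_triangle_ineq)
  also have "norm ((a - b) /\<^sub>R norm a) = norm (a - b) / norm a" using na by (simp add: divide_inverse_commute)
  finally show ?thesis using 2 by simp
qed

lemma dir_tendsto:
  fixes a b :: "nat \<Rightarrow> 'a::real_normed_vector"
  assumes "(\<lambda>i. norm (a i - b i) / norm (a i)) \<longlonglongrightarrow> 0"
    and "eventually (\<lambda>i. a i \<noteq> 0) sequentially"
    and "(\<lambda>i. a i /\<^sub>R norm (a i)) \<longlonglongrightarrow> d"
  shows "(\<lambda>i. b i /\<^sub>R norm (b i)) \<longlonglongrightarrow> d"
proof -
  have "(\<lambda>i. b i /\<^sub>R norm (b i) - a i /\<^sub>R norm (a i)) \<longlonglongrightarrow> 0"
  proof (rule Lim_null_comparison)
    show "eventually (\<lambda>i. norm (b i /\<^sub>R norm (b i) - a i /\<^sub>R norm (a i)) \<le> 2 * (norm (a i - b i) / norm (a i))) sequentially"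
      using assms(2) by eventually_elim (use dir_bound in \<open>auto simp: norm_minus_commute\<close>)
    show "(\<lambda>i. 2 * (norm (a i - b i) / norm (a i))) \<longlonglongrightarrow> 0"
      using tendsto_mult_right_zero[OF assms(1)] by simp
  qed
  from tendsto_add[OF this assms(3)] show ?thesis by simp
qed

lemma tdI:
  fixes x :: "nat \<Rightarrow> 'a::euclidean_space"
  assumes "eventually (\<lambda>i. x i \<in> A \<and> x i \<noteq> 0) sequentially"
    and "x \<longlonglongrightarrow> 0" and "(\<lambda>i. x i /\<^sub>R norm (x i)) \<longlonglongrightarrow> a"
  shows "a \<in> tangent_dirs A"
proof -
  obtain N where N: "\<And>i. i \<ge> N \<Longrightarrow> x i \<in> A \<and> x i \<noteq> 0"
    using assms(1) unfolding eventually_sequentially by blast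
  define x' where "x' = (\<lambda>i. x (i + N))"
  have 1: "\<forall>i. x' i \<in> A - {0}" using N unfolding x'_def by auto
  have 2: "x' \<longlonglongrightarrow> 0" unfolding x'_def using LIMSEQ_ignore_initial_segment[OF assms(2)] .
  have 3: "(\<lambda>i. x' i /\<^sub>R norm (x' i)) \<longlonglongrightarrow> a" unfolding x'_def
    using LIMSEQ_ignore_initial_segment[OF assms(3), of N] by simp
  have "(\<lambda>i. norm (x' i /\<^sub>R norm (x' i))) \<longlonglongrightarrow> norm a" using tendsto_norm[OF 3] .
  moreover have "(\<lambda>i. norm (x' i /\<^sub>R norm (x' i))) = (\<lambda>i. 1)" using 1 by auto
  ultimately have "norm a = 1" using LIMSEQ_unique tendsto_const by metis
  then show ?thesis unfolding tangent_dirs_def using 1 2 3 by auto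
qed

lemma td_mono: "A \<subseteq> B \<Longrightarrow> tangent_dirs A \<subseteq> tangent_dirs B"
  unfolding tangent_dirs_def by blast


theorem theorem2p30:
  fixes h :: "'a::euclidean_space \<Rightarrow> 'a" and r :: real and U V :: "'a set"
  assumes "bilipschitz_homeo_germ h r"
    and "0 \<in> closure U \<inter> closure V"
    and "tangent_dirs (U \<inter> V) = tangent_dirs U \<inter> tangent_dirs V"
    and "SSP (U \<inter> V)"
    and "SSP (h ` (U \<inter> ball 0 r))"
  shows "tangent_dirs (h ` (U \<inter> V \<inter> ball 0 r)) =
         tangent_dirs (h ` (U \<inter> ball 0 r)) \<inter> tangent_dirs (h ` (V \<inter> ball 0 r))"
proof
  show "tangent_dirs (h ` (U \<inter> V \<inter> ball 0 r)) \<subseteq>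
         tangent_dirs (h ` (U \<inter> ball 0 r)) \<inter> tangent_dirs (h ` (V \<inter> ball 0 r))"
    by (intro Int_greatest td_mono image_mono) auto
next
  have r0: "r > 0" and h0: "h 0 = 0" using assms(1) unfolding bilipschitz_homeo_germ_def by auto
  obtain K1 K2 where K: "0 < K1" "K1 \<le> K2"
    and Kb: "\<And>x y. x \<in> ball 0 r \<Longrightarrow> y \<in> ball 0 r \<Longrightarrow>
        K1 * norm (x - y) \<le> norm (h x - h y) \<and> norm (h x - h y) \<le> K2 * norm (x - y)"
    using assms(1) unfolding bilipschitz_homeo_germ_def by blast
  have K2: "K2 > 0" using K by simp
  have 0: "(0::'a) \<in> ball 0 r" using r0 by simp
  show "tangent_dirs (h ` (U \<inter> ball 0 r)) \<inter> tangent_dirs (h ` (V \<inter> ball 0 r))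
        \<subseteq> tangent_dirs (h ` (U \<inter> V \<inter> ball 0 r))"
  proof
    fix d assume d: "d \<in> tangent_dirs (h ` (U \<inter> ball 0 r)) \<inter> tangent_dirs (h ` (V \<inter> ball 0 r))"
    then have dV: "d \<in> tangent_dirs (h ` (V \<inter> ball 0 r))" by (rule IntD2)
    obtain y where y0: "(\<forall>i. y i \<in> h ` (V \<inter> ball 0 r) - {0}) \<and> y \<longlonglongrightarrow> 0 \<and>
       (\<lambda>i. y i /\<^sub>R norm (y i)) \<longlonglongrightarrow> d"
      by (insert dV[unfolded tangent_dirs_def mem_Collect_eq], elim conjE exE, rule that, intro conjI, assumption+)
    then have y: "\<And>i. y i \<in> h ` (V \<inter> ball 0 r) - {0}" "y \<longlonglongrightarrow> 0"
       "(\<lambda>i. y i /\<^sub>R norm (y i)) \<longlonglongrightarrow> d" by auto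
    have "\<forall>i. \<exists>v. v \<in> V \<inter> ball 0 r \<and> h v = y i"
    proof
      fix i
      obtain v where "v \<in> V \<inter> ball 0 r" "y i = h v" using y(1)[of i] by (auto elim!: imageE)
      then show "\<exists>v. v \<in> V \<inter> ball 0 r \<and> h v = y i" by auto
    qed
    then obtain v where v0: "\<forall>i. v i \<in> V \<inter> ball 0 r \<and> h (v i) = y i" by (rule choice[THEN exE]) blast
    then have v: "\<And>i. v i \<in> V \<inter> ball 0 r" "\<And>i. h (v i) = y i" by auto
    have vnz: "v i \<noteq> 0" for i using y(1)[of i] v[of i] h0 by auto
    have ynz: "y i \<noteq> 0" for i using y(1)[of i] by auto
    have vy: "K1 * norm (v i) \<le> norm (y i)" "norm (y i) \<le> K2 * norm (v i)" for i
      using Kb[OF _ 0, of "v i"] v[of i] h0 by auto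
    have vlim: "v \<longlonglongrightarrow> 0"
    proof (rule Lim_null_comparison)
      show "eventually (\<lambda>i. norm (v i) \<le> norm (y i) / K1) sequentially"
        using vy(1) K by (intro always_eventually allI) (simp add: pos_le_divide_eq mult.commute)
      show "(\<lambda>i. norm (y i) / K1) \<longlonglongrightarrow> 0"
        using tendsto_divide[OF tendsto_norm[OF y(2)] tendsto_const[of K1]] K by simp
    qed
    have dU: "d \<in> tangent_dirs (h ` (U \<inter> ball 0 r))" using d by (rule IntD1)
    obtain b where b: "\<And>m. b m \<in> h ` (U \<inter> ball 0 r)"
      "(\<lambda>m. norm (y m - b m) / norm (y m)) \<longlonglongrightarrow> 0"
      "(\<lambda>m. norm (y m - b m) / norm (b m)) \<longlonglongrightarrow> 0"
    proof -
      have "\<exists>b. (\<forall>m. b m \<in> h ` (U \<inter> ball 0 r)) \<and>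
         (\<lambda>m. norm (y m - b m) / norm (y m)) \<longlonglongrightarrow> 0 \<and>
         (\<lambda>m. norm (y m - b m) / norm (b m)) \<longlonglongrightarrow> 0"
        using assms(5)[unfolded SSP_def, rule_format, of y] y(2,3) dU by auto
      then show ?thesis using that by auto
    qed
    have "\<forall>i. \<exists>u. u \<in> U \<inter> ball 0 r \<and> h u = b i"
    proof
      fix i
      obtain u where "u \<in> U \<inter> ball 0 r" "b i = h u" using b(1)[of i] by (auto elim!: imageE)
      then show "\<exists>u. u \<in> U \<inter> ball 0 r \<and> h u = b i" by auto
    qed
    then obtain u where u0: "\<forall>i. u i \<in> U \<inter> ball 0 r \<and> h (u i) = b i" by (rule choice[THEN exE]) blast
    then have u: "\<And>i. u i \<in> U \<inter> ball 0 r" "\<And>i. h (u i) = b i" by auto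
    have vu: "norm (v i - u i) / norm (v i) \<le> (K2 / K1) * (norm (y i - b i) / norm (y i))" for i
    proof -
      have 1: "K1 * norm (v i - u i) \<le> norm (y i - b i)" using Kb[of "v i" "u i"] u v by auto
      have nv: "norm (v i) > 0" using vnz by simp
      have ny: "norm (y i) > 0" using ynz by simp
      have "norm (v i - u i) / norm (v i) \<le> (norm (y i - b i) / K1) / norm (v i)"
        using 1 K nv by (simp add: divide_right_mono field_simps)
      also have "\<dots> = (norm (y i - b i) / K1) / (norm (y i)) * (norm (y i) / norm (v i))"
        using nv ny by simp
      also have "\<dots> \<le> (norm (y i - b i) / K1) / (norm (y i)) * K2"
        using vy(2)[of i] nv K by (intro mult_left_mono) (auto simp: field_simps)
      also have "\<dots> = (K2 / K1) * (norm (y i - b i) / norm (y i))" by simp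
      finally show ?thesis .
    qed
    have vulim: "(\<lambda>i. norm (v i - u i) / norm (v i)) \<longlonglongrightarrow> 0"
    proof (rule Lim_null_comparison)
      show "eventually (\<lambda>i. norm (norm (v i - u i) / norm (v i)) \<le> (K2 / K1) * (norm (y i - b i) / norm (y i))) sequentially"
        using vu by simp
      show "(\<lambda>i. (K2 / K1) * (norm (y i - b i) / norm (y i))) \<longlonglongrightarrow> 0"
        by (rule tendsto_mult_right_zero[OF b(2)])
    qed
    have sph: "\<forall>i. v i /\<^sub>R norm (v i) \<in> sphere 0 1" using vnz by simp
    obtain e s where es: "e \<in> sphere 0 1" "strict_mono (s :: nat \<Rightarrow> nat)"
        "((\<lambda>i. v i /\<^sub>R norm (v i)) \<circ> s) \<longlonglongrightarrow> e"
      using seq_compactE[OF compact_imp_seq_compact[OF compact_sphere] sph] by blast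
    define vs where "vs = v \<circ> s"
    have vsdir: "(\<lambda>i. vs i /\<^sub>R norm (vs i)) \<longlonglongrightarrow> e" using es(3) by (simp add: vs_def comp_def)
    have vslim: "vs \<longlonglongrightarrow> 0" unfolding vs_def using LIMSEQ_subseq_LIMSEQ[OF vlim es(2)] .
    have vsulim: "(\<lambda>i. norm (vs i - u (s i)) / norm (vs i)) \<longlonglongrightarrow> 0"
      using LIMSEQ_subseq_LIMSEQ[OF vulim es(2)] by (simp add: vs_def comp_def)
    have eV: "e \<in> tangent_dirs V"
      by (rule tdI[OF _ vslim vsdir]) (use v vnz in \<open>auto simp: vs_def\<close>)
    have ev1: "eventually (\<lambda>i. norm (vs i - u (s i)) / norm (vs i) < 1) sequentially"
      using vsulim order_tendstoD(2) by fastforce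
    have usnz: "eventually (\<lambda>i. u (s i) \<noteq> 0) sequentially"
      using ev1 by eventually_elim (auto simp: vs_def vnz)
    have ulim: "(\<lambda>i. u (s i)) \<longlonglongrightarrow> 0"
    proof -
      have "(\<lambda>i. (norm (vs i - u (s i)) / norm (vs i)) * norm (vs i)) \<longlonglongrightarrow> 0"
        using tendsto_mult[OF vsulim tendsto_norm[OF vslim]] by simp
      moreover have "(\<lambda>i. (norm (vs i - u (s i)) / norm (vs i)) * norm (vs i)) = (\<lambda>i. norm (vs i - u (s i)))"
        by (simp add: vs_def vnz)
      ultimately have "(\<lambda>i. norm (vs i - u (s i))) \<longlonglongrightarrow> 0" by simp
      then have "(\<lambda>i. vs i - u (s i)) \<longlonglongrightarrow> 0" using tendsto_norm_zero_iff by blast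
      from tendsto_diff[OF vslim this] show ?thesis by simp
    qed
    have udir: "(\<lambda>i. u (s i) /\<^sub>R norm (u (s i))) \<longlonglongrightarrow> e"
      by (rule dir_tendsto[OF vsulim _ vsdir]) (simp add: vs_def vnz)
    have eU: "e \<in> tangent_dirs U"
      by (rule tdI[OF _ ulim udir]) (use usnz u in \<open>auto elim: eventually_mono\<close>)
    have eUV: "e \<in> tangent_dirs (U \<inter> V)" using eU eV assms(3) by blast
    obtain w where w: "\<And>m. w m \<in> U \<inter> V"
      "(\<lambda>m. norm (vs m - w m) / norm (vs m)) \<longlonglongrightarrow> 0"
      "(\<lambda>m. norm (vs m - w m) / norm (w m)) \<longlonglongrightarrow> 0"
      using assms(4) vslim vsdir eUV unfolding SSP_def by blast
    have ev2: "eventually (\<lambda>i. norm (vs i - w i) / norm (vs i) < 1) sequentially"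
      using w(2) order_tendstoD(2) by fastforce
    have wnz: "eventually (\<lambda>i. w i \<noteq> 0) sequentially"
      using ev2 by eventually_elim (auto simp: vs_def vnz)
    have wlim: "w \<longlonglongrightarrow> 0"
    proof -
      have "(\<lambda>i. (norm (vs i - w i) / norm (vs i)) * norm (vs i)) \<longlonglongrightarrow> 0"
        using tendsto_mult[OF w(2) tendsto_norm[OF vslim]] by simp
      moreover have "(\<lambda>i. (norm (vs i - w i) / norm (vs i)) * norm (vs i)) = (\<lambda>i. norm (vs i - w i))"
        by (simp add: vs_def vnz)
      ultimately have "(\<lambda>i. norm (vs i - w i)) \<longlonglongrightarrow> 0" by simp
      then have "(\<lambda>i. vs i - w i) \<longlonglongrightarrow> 0" using tendsto_norm_zero_iff by blast
      from tendsto_diff[OF vslim this] show ?thesis by simp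
    qed
    have wB: "eventually (\<lambda>i. w i \<in> ball 0 r) sequentially"
      using wlim r0 unfolding tendsto_iff by (auto simp: dist_norm)
    define z where "z = (\<lambda>i. h (w i))"
    have zin: "eventually (\<lambda>i. z i \<in> h ` (U \<inter> V \<inter> ball 0 r) \<and> z i \<noteq> 0) sequentially"
      using wB wnz
    proof eventually_elim
      case (elim i)
      have "K1 * norm (w i - 0) \<le> norm (h (w i) - h 0)" using Kb[OF elim(1) 0] by blast
      moreover have "K1 * norm (w i) > 0" using K elim(2) by simp
      ultimately have "h (w i) \<noteq> 0" using h0 by auto
      then show ?case using elim w(1) unfolding z_def by auto
    qed
    have zlim: "z \<longlonglongrightarrow> 0"
    proof (rule Lim_null_comparison)
      show "eventually (\<lambda>i. norm (z i) \<le> K2 * norm (w i)) sequentially"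
        using wB by eventually_elim (use Kb[OF _ 0] h0 in \<open>auto simp: z_def\<close>)
      show "(\<lambda>i. K2 * norm (w i)) \<longlonglongrightarrow> 0"
        using tendsto_mult_right_zero[OF tendsto_norm_zero[OF wlim], of K2] by simp
    qed
    have yzlim: "(\<lambda>i. norm (y (s i) - z i) / norm (y (s i))) \<longlonglongrightarrow> 0"
    proof (rule Lim_null_comparison)
      show "eventually (\<lambda>i. norm (norm (y (s i) - z i) / norm (y (s i))) \<le> (K2 / K1) * (norm (vs i - w i) / norm (vs i))) sequentially"
        using wB
      proof eventually_elim
        case (elim i)
        have nv: "norm (vs i) > 0" using vnz by (simp add: vs_def)
        have 1: "norm (y (s i) - z i) \<le> K2 * norm (vs i - w i)"
          using Kb[OF _ elim, of "v (s i)"] v[of "s i"] unfolding z_def vs_def by auto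
        have 2: "K1 * norm (vs i) \<le> norm (y (s i))" using vy(1)[of "s i"] by (simp add: vs_def)
        have ny: "norm (y (s i)) > 0" using ynz by simp
        have "norm (y (s i) - z i) / norm (y (s i)) \<le> K2 * norm (vs i - w i) / norm (y (s i))"
          using 1 ny by (simp add: divide_right_mono)
        also have "\<dots> \<le> K2 * norm (vs i - w i) / (K1 * norm (vs i))"
          using 2 K nv ny by (intro divide_left_mono) auto
        also have "\<dots> = (K2 / K1) * (norm (vs i - w i) / norm (vs i))" by simp
        finally show ?case by simp
      qed
      show "(\<lambda>i. (K2 / K1) * (norm (vs i - w i) / norm (vs i))) \<longlonglongrightarrow> 0"
        by (rule tendsto_mult_right_zero[OF w(2)])
    qed
    have ysdir: "(\<lambda>i. y (s i) /\<^sub>R norm (y (s i))) \<longlonglongrightarrow> d"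
      using LIMSEQ_subseq_LIMSEQ[OF y(3) es(2)] by (simp add: comp_def)
    have zdir: "(\<lambda>i. z i /\<^sub>R norm (z i)) \<longlonglongrightarrow> d"
      by (rule dir_tendsto[OF yzlim _ ysdir]) (simp add: ynz)
    show "d \<in> tangent_dirs (h ` (U \<inter> V \<inter> ball 0 r))"
      by (rule tdI[OF zin zlim zdir])
  qed
qed

end
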